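(* Let $d\ge 1$ and let $x\in\mathbb{R}^d$ be non-zero, and let $k=\lceil\|x\|_2\rceil$ be the upper integer part of $\|x\|_2$. Then $$\sup \mathbb{P}(X_1+\cdots+X_n=x)=\mathbb{P}(R_{k^2}=k),$$ where the supremum is taken over all $n\ge 1$ and all collections $X_1,\ldots,X_n$ of independent symmetric random variables in $\mathbb{R}^d$ with $\|X_i\|_2\le 1$ almost surely, and where $R_{m}$ denotes the sum of $m$ independent Rademacher random variables.
   Context: A random variable $X$ in $\mathbb{R}^d$ is symmetric if $X$ and $-X$ have the same distribution. A Rademacher random variable $\varepsilon$ satisfies $\mathbb{P}(\varepsilon=1)=\mathbb{P}(\varepsilon=-1)=\tfrac12$. *)

theory Defs
  imports "HOL-Probability.Probability"
begin

definition rademacher_sum_prob :: "nat \<Rightarrow> int \<Rightarrow> real" where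
  "rademacher_sum_prob m k =
     measure_pmf.prob (Pi_pmf {..<m} 0 (\<lambda>_. pmf_of_set {-1, 1::int}))
       {e. (\<Sum>i<m. e i) = k}"

definition sym_sum_probs :: "'a itself \<Rightarrow> (real, 'd::finite) vec \<Rightarrow> real set" where
  "sym_sum_probs _ x =
     {measure M {\<omega> \<in> space M. (\<Sum>i<n. X i \<omega>) = x} | (M :: 'a measure) n (X :: nat \<Rightarrow> 'a \<Rightarrow> (real, 'd) vec).
        prob_space M \<and> n \<ge> 1 \<and>
        prob_space.indep_vars M (\<lambda>_. borel) X {..<n} \<and>
        (\<forall>i<n. distr M borel (X i) = distr M borel (\<lambda>\<omega>. - X i \<omega>)) \<and>
        (\<forall>i<n. AE \<omega> in M. norm (X i \<omega>) \<le> 1)}"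

end

theory Submission
  imports Defs
begin

definition Gs :: "(nat \<Rightarrow> real) \<Rightarrow> nat set \<Rightarrow> nat set \<Rightarrow> real" where
  "Gs b A S = (\<Sum>i\<in>A. if i \<in> S then b i else - b i)"

definition chain_ok :: "(nat \<Rightarrow> real) \<Rightarrow> nat set \<Rightarrow> nat set list \<Rightarrow> bool" where
  "chain_ok b A c \<longleftrightarrow> c \<noteq> [] \<and> hd c \<subseteq> A \<and>
     (\<forall>i. Suc i < length c \<longrightarrow> (\<exists>z\<in>A. z \<notin> c!i \<and> c!Suc i = insert z (c!i))) \<and>
     card (hd c) + card (last c) = card A \<and> Gs b A (last c) \<le> sum b (last c - hd c)"

lemma Gs_insert_set:
  assumes "finite A" "y \<notin> A"
  shows "Gs b (insert y A) S = Gs b A S + (if y \<in> S then b y else - b y)"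
  using assms by (simp add: Gs_def)

lemma Gs_insert_elem:
  assumes "finite A" "z \<in> A" "z \<notin> S"
  shows "Gs b A (insert z S) = Gs b A S + 2 * b z"
proof -
  have "Gs b A (insert z S) = b z + (\<Sum>i\<in>A-{z}. if i \<in> insert z S then b i else - b i)"
    unfolding Gs_def by (subst sum.remove[OF assms(1,2)]) simp
  also have "(\<Sum>i\<in>A-{z}. if i \<in> insert z S then b i else - b i) = (\<Sum>i\<in>A-{z}. if i \<in> S then b i else - b i)"
    by (rule sum.cong) auto
  moreover have "Gs b A S = - b z + (\<Sum>i\<in>A-{z}. if i \<in> S then b i else - b i)"
    unfolding Gs_def by (subst sum.remove[OF assms(1,2)]) (simp add: assms)
  ultimately show ?thesis by simp
qed

lemma Gs_outside:
  assumes "y \<notin> A"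
  shows "Gs b A (insert y S) = Gs b A S"
  unfolding Gs_def by (rule sum.cong) (use assms in auto)

lemma chain_props:
  assumes "chain_ok b A c" "finite A"
  shows "i < length c \<Longrightarrow> c!i \<subseteq> A \<and> hd c \<subseteq> c!i \<and> card (c!i) = card (hd c) + i"
proof (induction i)
  case 0
  then show ?case using assms by (auto simp: chain_ok_def hd_conv_nth)
next
  case (Suc i)
  then obtain z where z: "z \<in> A" "z \<notin> c!i" "c!Suc i = insert z (c!i)"
    using assms unfolding chain_ok_def by blast
  have fin: "finite (c!i)" using Suc assms finite_subset by auto
  show ?case using Suc z fin by auto
qed

lemma chain_last:
  assumes "chain_ok b A c"
  shows "last c = c ! (length c - 1)"
  using assms by (simp add: chain_ok_def last_conv_nth)

lemma chain_mono:
  assumes "chain_ok b A c" "finite A" "\<forall>z\<in>A. b z > 0"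
  shows "j < length c \<Longrightarrow> i < j \<Longrightarrow> Gs b A (c!i) < Gs b A (c!j)"
proof (induction j)
  case 0
  then show ?case by simp
next
  case (Suc j)
  then obtain z where z: "z \<in> A" "z \<notin> c!j" "c!Suc j = insert z (c!j)"
    using assms unfolding chain_ok_def by blast
  have "Gs b A (c!Suc j) = Gs b A (c!j) + 2 * b z"
    using z Gs_insert_elem[OF assms(2)] by simp
  moreover have "b z > 0" using z assms by auto
  moreover have "i < j \<longrightarrow> Gs b A (c!i) < Gs b A (c!j)" using Suc by auto
  ultimately show ?case using Suc.prems by (cases "i < j") (auto simp: less_Suc_eq)
qed

lemma chain_set_sub:
  assumes "chain_ok b A c" "finite A" "X \<in> set c"
  shows "X \<subseteq> A"
  using assms chain_props[OF assms(1,2)] by (auto simp: in_set_conv_nth)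

lemma chain_butlast_ne_last:
  assumes "chain_ok b A c" "finite A" "X \<in> set (butlast c)"
  shows "X \<noteq> last c"
proof -
  obtain i where i: "i < length c - 1" "X = c ! i"
    using assms(3) by (auto simp: in_set_conv_nth nth_butlast)
  have ne: "c \<noteq> []" using assms(1) by (simp add: chain_ok_def)
  have "card X = card (hd c) + i" using chain_props[OF assms(1,2), of i] i by auto
  moreover have "card (last c) = card (hd c) + (length c - 1)"
    using chain_props[OF assms(1,2), of "length c - 1"] ne chain_last[OF assms(1)] by auto
  ultimately show ?thesis using i by auto
qed

lemma chain_step_ok1:
  assumes fin: "finite A" and y: "y \<notin> A" and ok: "chain_ok b A c"
  shows "chain_ok b (insert y A) (c @ [insert y (last c)])"
proof -
  have ne: "c \<noteq> []" using ok by (simp add: chain_ok_def)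
  have lastA: "last c \<subseteq> A" using chain_set_sub[OF ok fin] ne by auto
  have hdA: "hd c \<subseteq> A" using ok by (simp add: chain_ok_def)
  have finl: "finite (last c)" using lastA fin finite_subset by blast
  have steps: "\<forall>i. Suc i < length (c @ [insert y (last c)]) \<longrightarrow>
     (\<exists>z\<in>insert y A. z \<notin> (c @ [insert y (last c)])!i \<and>
        (c @ [insert y (last c)])!Suc i = insert z ((c @ [insert y (last c)])!i))"
  proof (intro allI impI)
    fix i assume i: "Suc i < length (c @ [insert y (last c)])"
    show "\<exists>z\<in>insert y A. z \<notin> (c @ [insert y (last c)])!i \<and>
        (c @ [insert y (last c)])!Suc i = insert z ((c @ [insert y (last c)])!i)"
    proof (cases "Suc i < length c")
      case True
      then obtain z where "z \<in> A" "z \<notin> c!i" "c!Suc i = insert z (c!i)"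
        using ok unfolding chain_ok_def by blast
      then show ?thesis using True by (auto simp: nth_append)
    next
      case False
      then have "Suc i = length c" using i by simp
      then have "i = length c - 1" by simp
      then have "c ! i = last c" using ne by (simp add: last_conv_nth)
      then show ?thesis using False i \<open>Suc i = length c\<close> lastA y
        by (auto simp: nth_append)
    qed
  qed
  have card: "card (hd c) + card (insert y (last c)) = card (insert y A)"
  proof -
    have "y \<notin> last c" using y lastA by auto
    then have "card (insert y (last c)) = card (last c) + 1" using finl by simp
    then show ?thesis using ok y fin unfolding chain_ok_def by simp
  qed
  have "Gs b (insert y A) (insert y (last c)) = Gs b A (last c) + b y"
    using Gs_insert_set[OF fin y] Gs_outside[OF y] by simp
  also have "\<dots> \<le> sum b (last c - hd c) + b y" using ok by (simp add: chain_ok_def)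
  also have "\<dots> = sum b (insert y (last c) - hd c)"
  proof -
    have "insert y (last c) - hd c = insert y (last c - hd c)" using y hdA by auto
    moreover have "y \<notin> last c - hd c" using y lastA by auto
    ultimately show ?thesis using finl by simp
  qed
  finally have g: "Gs b (insert y A) (last (c @ [insert y (last c)])) \<le> sum b (last (c @ [insert y (last c)]) - hd (c @ [insert y (last c)]))"
    using ne by simp
  have h: "hd (c @ [insert y (last c)]) \<subseteq> insert y A" using ne hdA by auto
  have cc: "card (hd (c @ [insert y (last c)])) + card (last (c @ [insert y (last c)])) = card (insert y A)"
    using card ne by simp
  show ?thesis unfolding chain_ok_def using g h cc steps by blast
qed

lemma chain_step_ok2:
  assumes fin: "finite A" and y: "y \<notin> A" and ok: "chain_ok b A c" and len: "2 \<le> length c"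
    and hb: "\<forall>z\<in>A. b y \<le> b z"
  shows "chain_ok b (insert y A) (map (insert y) (butlast c))"
proof -
  let ?d = "map (insert y) (butlast c)"
  have ne: "c \<noteq> []" using len by auto
  have hdA: "hd c \<subseteq> A" using ok by (simp add: chain_ok_def)
  have lend: "length ?d = length c - 1" by simp
  have dnth: "\<And>i. i < length c - 1 \<Longrightarrow> ?d ! i = insert y (c ! i)"
    by (simp add: nth_butlast)
  have "butlast c \<noteq> []" using len by (cases c) auto
  then have hdd: "hd ?d = insert y (hd c)"
    using len dnth[of 0] by (simp add: hd_conv_nth ne hd_map)
  have steps: "\<forall>i. Suc i < length ?d \<longrightarrow> (\<exists>z\<in>insert y A. z \<notin> ?d!i \<and> ?d!Suc i = insert z (?d!i))"
  proof (intro allI impI)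
    fix i assume i: "Suc i < length ?d"
    then have "Suc i < length c" by simp
    then obtain z where z: "z \<in> A" "z \<notin> c!i" "c!Suc i = insert z (c!i)"
      using ok unfolding chain_ok_def by blast
    have "z \<noteq> y" using z y by auto
    then show "\<exists>z\<in>insert y A. z \<notin> ?d!i \<and> ?d!Suc i = insert z (?d!i)"
    proof (intro bexI[of _ z] conjI)
      have e1: "?d!i = insert y (c!i)" using i dnth[of i] by simp
      have e2: "?d!Suc i = insert y (c!Suc i)" using i dnth[of "Suc i"] by simp
      show "z \<notin> ?d!i" using e1 z \<open>z \<noteq> y\<close> by simp
      show "?d!Suc i = insert z (?d!i)" using e1 e2 z(3) by (simp add: insert_commute)
    qed (use z in simp)
  qed
  define X where "X = c ! (length c - 2)"
  have dne: "?d \<noteq> []" using len by (cases c) auto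
  have l2: "length c - 2 < length c - 1" "length ?d - 1 = length c - 2" using len by auto
  have lastd: "last ?d = insert y X"
    using dnth[OF l2(1)] l2(2) dne unfolding X_def by (simp add: last_conv_nth)
  have l3: "Suc (length c - 2) < length c" "Suc (length c - 2) = length c - 1" using len by auto
  obtain z where z: "z \<in> A" "z \<notin> X" "c ! Suc (length c - 2) = insert z X"
    using ok l3(1) unfolding chain_ok_def X_def by blast
  have "last c = c ! Suc (length c - 2)" using l3(2) ne by (simp add: last_conv_nth)
  with z have z: "z \<in> A" "z \<notin> X" "last c = insert z X" by auto
  have XA: "X \<subseteq> A" and hdX: "hd c \<subseteq> X" and cX: "card X = card (hd c) + (length c - 2)"
    using chain_props[OF ok fin, of "length c - 2"] len unfolding X_def by auto
  have cl: "card (last c) = card (hd c) + (length c - 1)"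
    using chain_props[OF ok fin, of "length c - 1"] ne chain_last[OF ok] by auto
  have finX: "finite X" using XA fin finite_subset by blast
  have card: "card (hd ?d) + card (last ?d) = card (insert y A)"
  proof -
    have "finite (hd c)" using hdA fin finite_subset by blast
    moreover have "y \<notin> hd c" using hdA y by blast
    ultimately have "card (hd ?d) = card (hd c) + 1" using hdd by simp
    moreover have "y \<notin> X" using XA y by blast
    moreover have "card (last ?d) = card X + 1" using lastd finX \<open>y \<notin> X\<close> by simp
    moreover have "card (hd c) + card (last c) = card A" using ok by (simp add: chain_ok_def)
    ultimately show ?thesis using cX cl len fin y by auto
  qed
  have "Gs b (insert y A) (last ?d) = Gs b A X + b y"
    using lastd Gs_insert_set[OF fin y] Gs_outside[OF y] by simp
  also have "Gs b A X = Gs b A (last c) - 2 * b z"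
    using Gs_insert_elem[OF fin z(1,2)] z(3) by simp
  also have "Gs b A (last c) \<le> sum b (last c - hd c)" using ok by (simp add: chain_ok_def)
  also have "sum b (last c - hd c) = sum b (X - hd c) + b z"
  proof -
    have "last c - hd c = insert z (X - hd c)" using z hdX by auto
    moreover have "z \<notin> X - hd c" using z by auto
    ultimately show ?thesis using finX by simp
  qed
  finally have "Gs b (insert y A) (last ?d) \<le> sum b (X - hd c)" using hb z by auto
  also have "X - hd c = last ?d - hd ?d" using lastd hdd XA y by auto
  finally have g: "Gs b (insert y A) (last ?d) \<le> sum b (last ?d - hd ?d)" .
  have h: "hd ?d \<subseteq> insert y A" using hdd hdA by auto
  show ?thesis unfolding chain_ok_def using g h card steps dne by blast
qed

lemma chain_step_uniq:
  assumes fin: "finite A" and y: "y \<notin> A"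
    and uniq: "\<forall>S. S \<subseteq> A \<longrightarrow> (\<exists>!c. c \<in> C \<and> S \<in> set c)"
    and ok: "\<forall>c\<in>C. chain_ok b A c"
    and C'_def: "C' = (\<lambda>c. c @ [insert y (last c)]) ` C \<union> (\<lambda>c. map (insert y) (butlast c)) ` {c\<in>C. 2 \<le> length c}"
  shows "\<forall>S. S \<subseteq> insert y A \<longrightarrow> (\<exists>!d. d \<in> C' \<and> S \<in> set d)"
proof (intro allI impI)
  fix S assume S: "S \<subseteq> insert y A"
  define X where "X = S - {y}"
  have XA: "X \<subseteq> A" using S X_def by auto
  obtain c where c: "c \<in> C" "X \<in> set c" using uniq XA by blast
  have cu: "\<And>c'. c' \<in> C \<Longrightarrow> X \<in> set c' \<Longrightarrow> c' = c" using uniq XA c by blast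
  have okc: "chain_ok b A c" using ok c by auto
  have ne: "c \<noteq> []" using okc by (simp add: chain_ok_def)
  define d0 where "d0 = (if y \<in> S \<and> X \<noteq> last c then map (insert y) (butlast c) else c @ [insert y (last c)])"
  show "\<exists>!d. d \<in> C' \<and> S \<in> set d"
  proof (rule ex1I[of _ d0])
    show "d0 \<in> C' \<and> S \<in> set d0"
    proof (cases "y \<in> S \<and> X \<noteq> last c")
      case True
      have "set c = set (butlast c) \<union> {last c}" using ne
        by (metis append_butlast_last_id set_append Un_insert_right empty_set list.simps(15) sup_bot.right_neutral)
      then have Xb: "X \<in> set (butlast c)" using True c by auto
      then have "butlast c \<noteq> []" by auto
      then have "length c - 1 \<noteq> 0" by (metis length_0_conv length_butlast)
      then have "2 \<le> length c" by simp
      moreover have "S = insert y X" using True X_def by auto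
      ultimately show ?thesis using True Xb c unfolding d0_def C'_def by auto
    next
      case False
      show ?thesis
      proof (cases "y \<in> S")
        case True
        then have "S = insert y (last c)" using False X_def by auto
        then show ?thesis using False c unfolding d0_def C'_def by auto
      next
        case f2: False
        then have "S = X" using X_def by auto
        then show ?thesis using False c unfolding d0_def C'_def by auto
      qed
    qed
  next
    fix d assume d: "d \<in> C' \<and> S \<in> set d"
    show "d = d0"
    proof (cases "d \<in> (\<lambda>c. c @ [insert y (last c)]) ` C")
      case True
      then obtain c' where c': "c' \<in> C" "d = c' @ [insert y (last c')]" by blast
      have okc': "chain_ok b A c'" using ok c' by auto
      have ne': "c' \<noteq> []" using okc' by (simp add: chain_ok_def)
      have "S \<in> set c' \<or> S = insert y (last c')" using d c' by auto
      then show ?thesis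
      proof
        assume Sc: "S \<in> set c'"
        then have "S \<subseteq> A" using chain_set_sub[OF okc' fin] by auto
        then have "y \<notin> S" "X = S" using y X_def by auto
        then have "c' = c" using cu c' Sc by auto
        then show ?thesis using c' \<open>y \<notin> S\<close> unfolding d0_def by auto
      next
        assume Sl: "S = insert y (last c')"
        have "last c' \<subseteq> A" using chain_set_sub[OF okc' fin] ne' by auto
        then have "X = last c'" using Sl y X_def by auto
        then have "c' = c" using cu c' ne' by auto
        then show ?thesis using c' \<open>X = last c'\<close> unfolding d0_def by auto
      qed
    next
      case False
      have "d \<in> (\<lambda>c. map (insert y) (butlast c)) ` {c\<in>C. 2 \<le> length c}"
        using d False unfolding C'_def by blast
      then obtain c' where c': "c' \<in> C" "2 \<le> length c'" "d = map (insert y) (butlast c')"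
        by blast
      have okc': "chain_ok b A c'" using ok c' by auto
      obtain W where W: "W \<in> set (butlast c')" "S = insert y W" using d c' by auto
      have Wc: "W \<in> set c'" using W(1) in_set_butlastD by metis
      have "W \<subseteq> A" using chain_set_sub[OF okc' fin Wc] .
      then have "X = W" using W y X_def by auto
      then have "c' = c" using cu c' Wc by auto
      moreover have "W \<noteq> last c'" using chain_butlast_ne_last[OF okc' fin W(1)] .
      ultimately show ?thesis using c' W \<open>X = W\<close> unfolding d0_def by auto
    qed
  qed
qed

lemma chains_exist:
  assumes "distinct xs" "sorted (map b xs)"
  shows "\<exists>C. (\<forall>S. S \<subseteq> set xs \<longrightarrow> (\<exists>!c. c \<in> C \<and> S \<in> set c)) \<and> (\<forall>c\<in>C. chain_ok b (set xs) c)"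
  using assms
proof (induction xs)
  case Nil
  have "chain_ok b {} [{}]" by (simp add: chain_ok_def Gs_def)
  then show ?case by (intro exI[of _ "{[{}]}"]) auto
next
  case (Cons y ys)
  then obtain C where C: "\<forall>S. S \<subseteq> set ys \<longrightarrow> (\<exists>!c. c \<in> C \<and> S \<in> set c)" "\<forall>c\<in>C. chain_ok b (set ys) c"
    by auto
  define C' where "C' = (\<lambda>c. c @ [insert y (last c)]) ` C \<union> (\<lambda>c. map (insert y) (butlast c)) ` {c\<in>C. 2 \<le> length c}"
  have y: "y \<notin> set ys" using Cons.prems by auto
  have hb: "\<forall>z\<in>set ys. b y \<le> b z" using Cons.prems by auto
  have "\<forall>S. S \<subseteq> insert y (set ys) \<longrightarrow> (\<exists>!d. d \<in> C' \<and> S \<in> set d)"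
    using chain_step_uniq[OF _ y C(1) C(2) C'_def] by simp
  moreover have "\<forall>c\<in>C'. chain_ok b (insert y (set ys)) c"
    using chain_step_ok1[OF _ y] chain_step_ok2[OF _ y _ _ hb] C(2) unfolding C'_def by auto
  ultimately show ?case by auto
qed


lemma chain_hit_facts:
  assumes ok: "chain_ok b P c" and fin: "finite P" and pos: "\<forall>i\<in>P. 0 < b i \<and> b i \<le> 1"
    and kt: "real k - 1 < t" and U: "U \<in> set c" and gU: "Gs b P U = t"
  shows "2 * card (hd c) + k \<le> card P \<and> length c = card P - 2 * card (hd c) + 1"
proof -
  have ne: "c \<noteq> []" using ok by (simp add: chain_ok_def)
  define h where "h = card (hd c)"
  have cl: "card (last c) = h + (length c - 1)" and hdl: "hd c \<subseteq> last c"
    using chain_props[OF ok fin, of "length c - 1"] ne chain_last[OF ok] h_def by auto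
  have sym: "h + card (last c) = card P" using ok h_def by (simp add: chain_ok_def)
  have lenc: "length c = card P - 2 * h + 1" using cl sym ne by (cases c) auto
  obtain i where i: "i < length c" "U = c ! i" using U by (auto simp: in_set_conv_nth)
  have "t \<le> Gs b P (last c)"
  proof (cases "i = length c - 1")
    case True then show ?thesis using gU i chain_last[OF ok] by simp
  next
    case False
    then have "i < length c - 1" using i by simp
    then have "Gs b P (c!i) < Gs b P (c!(length c - 1))"
      using chain_mono[OF ok fin] pos ne by simp
    then show ?thesis using gU i chain_last[OF ok] by simp
  qed
  also have "Gs b P (last c) \<le> sum b (last c - hd c)" using ok by (simp add: chain_ok_def)
  also have "\<dots> \<le> real (card (last c - hd c)) * 1"
    apply (rule sum_bounded_above)
    using chain_set_sub[OF ok fin, of "last c"] ne pos by auto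
  also have "card (last c - hd c) = card (last c) - h"
  proof -
    have "last c \<subseteq> P" using chain_set_sub[OF ok fin, of "last c"] ne by auto
    then have "finite (hd c)" using hdl fin by (meson finite_subset)
    then show ?thesis using hdl h_def by (simp add: card_Diff_subset)
  qed
  finally have "t \<le> real (card (last c) - h)" by simp
  with kt have "k \<le> card (last c) - h" by linarith
  moreover have "card (hd c) \<le> card (last c)"
  proof -
    have "last c \<subseteq> P" using chain_set_sub[OF ok fin, of "last c"] ne by auto
    then show ?thesis using hdl fin by (meson card_mono finite_subset)
  qed
  ultimately show ?thesis using sym lenc h_def by auto
qed

lemma count_hits:
  assumes fin: "finite P" and pos: "\<forall>i\<in>P. 0 < b i \<and> b i \<le> 1" and kt: "real k - 1 < t"
  shows "card {U. U \<subseteq> P \<and> Gs b P U = t} \<le> (if k \<le> card P then card P choose ((card P - k) div 2) else 0)"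
proof -
  define xs where "xs = sort_key b (sorted_list_of_set P)"
  have xs: "distinct xs" "set xs = P" "sorted (map b xs)"
    using fin unfolding xs_def by (auto simp: distinct_sort sorted_sort_key)
  obtain C where C: "\<forall>S. S \<subseteq> P \<longrightarrow> (\<exists>!c. c \<in> C \<and> S \<in> set c)" "\<forall>c\<in>C. chain_ok b P c"
    using chains_exist[OF xs(1,3)] xs(2) by auto
  define H where "H = {U. U \<subseteq> P \<and> Gs b P U = t}"
  define p where "p = card P"
  define j where "j = (p - k) div 2"
  define cf where "cf = (\<lambda>U. THE c. c \<in> C \<and> U \<in> set c)"
  have cf: "\<And>U. U \<in> H \<Longrightarrow> cf U \<in> C \<and> U \<in> set (cf U)"
    unfolding cf_def H_def using C(1) by (metis (mono_tags, lifting) mem_Collect_eq theI')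
  have facts: "\<And>U. U \<in> H \<Longrightarrow> 2 * card (hd (cf U)) + k \<le> p \<and> length (cf U) = p - 2 * card (hd (cf U)) + 1"
    using chain_hit_facts[OF _ fin pos kt] cf C(2) unfolding H_def p_def by auto
  define f where "f = (\<lambda>U. cf U ! (j - card (hd (cf U))))"
  have fU: "\<And>U. U \<in> H \<Longrightarrow> f U \<in> set (cf U) \<and> f U \<subseteq> P \<and> card (f U) = j"
  proof -
    fix U assume U: "U \<in> H"
    let ?c = "cf U" let ?h = "card (hd (cf U))"
    have ok: "chain_ok b P ?c" using cf U C(2) by auto
    have hj: "?h \<le> j" "j - ?h < length ?c" using facts[OF U] unfolding j_def by auto
    have "f U = ?c ! (j - ?h)" by (simp add: f_def)
    then show "f U \<in> set (cf U) \<and> f U \<subseteq> P \<and> card (f U) = j"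
      using chain_props[OF ok fin hj(2)] hj by auto
  qed
  have inj: "inj_on f H"
  proof (rule inj_onI)
    fix U1 U2 assume U1: "U1 \<in> H" and U2: "U2 \<in> H" and eq: "f U1 = f U2"
    have "cf U1 = cf U2"
      using C(1) fU[OF U1] fU[OF U2] cf[OF U1] cf[OF U2] eq by metis
    then have s: "U2 \<in> set (cf U1)" using cf[OF U2] by simp
    let ?c = "cf U1"
    have ok: "chain_ok b P ?c" using cf U1 C(2) by auto
    obtain i1 where i1: "i1 < length ?c" "U1 = ?c ! i1" using cf[OF U1] by (auto simp: in_set_conv_nth)
    obtain i2 where i2: "i2 < length ?c" "U2 = ?c ! i2" using s by (auto simp: in_set_conv_nth)
    have g: "Gs b P (?c ! i1) = Gs b P (?c ! i2)" using U1 U2 i1 i2 unfolding H_def by simp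
    have "i1 = i2"
    proof (rule ccontr)
      assume "i1 \<noteq> i2"
      then consider "i1 < i2" | "i2 < i1" by linarith
      then show False
        using chain_mono[OF ok fin] pos i1 i2 g by cases force+
    qed
    then show "U1 = U2" using i1 i2 by simp
  qed
  show ?thesis
  proof (cases "H = {}")
    case True
    then have e: "{U. U \<subseteq> P \<and> Gs b P U = t} = {}" unfolding H_def by simp
    show ?thesis unfolding e by simp
  next
    case False
    then obtain U where "U \<in> H" by auto
    then have kp: "k \<le> p" using facts by fastforce
    have "card H = card (f ` H)" using inj by (simp add: card_image)
    also have "\<dots> \<le> card {W. W \<subseteq> P \<and> card W = j}"
      by (rule card_mono) (use fin fU in auto)
    also have "\<dots> = p choose j" using n_subsets[OF fin] p_def by simp
    finally show ?thesis using kp unfolding H_def p_def j_def by simp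
  qed
qed


definition Bk :: "nat \<Rightarrow> nat \<Rightarrow> real" where
  "Bk k j = real ((k + 2*j) choose j) / 2 ^ (k + 2*j)"

lemma mult_chain_aux:
  fixes X Y1 Z j1 kj n1 n2 :: nat
  assumes "j1 * X = n2 * Y1" "kj * Y1 = n1 * Z"
  shows "X * (j1 * kj) = Z * (n2 * n1)"
proof -
  have "X * (j1 * kj) = (j1 * X) * kj" by (simp only: ac_simps)
  also have "\<dots> = n2 * (kj * Y1)" unfolding assms(1) by (simp only: ac_simps)
  also have "\<dots> = Z * (n2 * n1)" unfolding assms(2) by (simp only: ac_simps)
  finally show ?thesis .
qed

lemma binom_ratio_nat:
  "((k+2*j+2) choose (j+1)) * ((j+1) * (k+j+1)) = ((k+2*j) choose j) * ((k+2*j+2) * (k+2*j+1))"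
proof -
  have a: "Suc j * (Suc (Suc (k+2*j)) choose Suc j) = Suc (Suc (k+2*j)) * (Suc (k+2*j) choose j)"
    by (rule Suc_times_binomial)
  have b: "(Suc (k+2*j) - j) * (Suc (k+2*j) choose j) = Suc (k+2*j) * ((k+2*j) choose j)"
    using binomial_absorb_comp[of "Suc (k+2*j)" j] by simp
  have c: "Suc (k+2*j) - j = k+j+1" by simp
  have "(Suc (Suc (k+2*j)) choose Suc j) * (Suc j * (k+j+1)) = ((k+2*j) choose j) * (Suc (Suc (k+2*j)) * Suc (k+2*j))"
    by (rule mult_chain_aux[OF a b[unfolded c]])
  then show ?thesis by simp
qed

lemma Bk_step_gen:
  fixes A B :: nat
  assumes "A * ((j+1) * (k+j+1)) = B * ((k+2*j+2) * (k+2*j+1))"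
  shows "real A / 2^(k+2*j+2) * (4 * (real j+1) * (real k + real j + 1)) = real B / 2^(k+2*j) * ((real k + 2*real j + 2) * (real k + 2*real j + 1))"
proof -
  have e: "real A * ((real j+1) * (real k+real j+1)) = real B * ((real k+2*real j+2) * (real k+2*real j+1))"
  proof -
    have "real (A * ((j+1) * (k+j+1))) = real (B * ((k+2*j+2) * (k+2*j+1)))" using assms by metis
    then show ?thesis by (simp only: of_nat_mult of_nat_add of_nat_1 of_nat_numeral)
  qed
  have p: "(2::real) ^ (k+2*j+2) = 4 * 2 ^ (k+2*j)" by (simp add: power_add)
  define c :: real where "c = 2 ^ (k+2*j)"
  define Y where "Y = (real j+1) * (real k+real j+1)"
  define W where "W = (real k+2*real j+2) * (real k+2*real j+1)"
  have c: "c > 0" unfolding c_def by simp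
  have "real A / (4 * c) * (4 * Y) = (real A * Y) / c" using c by (simp add: field_simps)
  also have "real A * Y = real B * W" using e unfolding Y_def W_def .
  finally have "real A / (4 * c) * (4 * Y) = real B / c * W" by simp
  moreover have "4 * (real j+1) * (real k + real j + 1) = 4 * Y" by (simp add: Y_def)
  ultimately show ?thesis unfolding p c_def[symmetric] W_def by simp
qed

lemma Bk_step:
  "Bk k (j+1) * (4 * (real j+1) * (real k + real j + 1)) = Bk k j * ((real k + 2*real j + 2) * (real k + 2*real j + 1))"
proof -
  have "k + 2*(j+1) = k+2*j+2" by simp
  then show ?thesis unfolding Bk_def using Bk_step_gen[OF binom_ratio_nat[of k j]] by simp
qed

lemma Bk_up:
  assumes "k + 2*j + 2 \<le> k^2"
  shows "Bk k j \<le> Bk k (j+1)"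
proof -
  have kk: "real k ^ 2 \<ge> real k + 2*real j + 2" using assms
    by (metis of_nat_add of_nat_le_iff of_nat_mult of_nat_numeral of_nat_power)
  have "4 * (real j+1) * (real k + real j + 1) \<le> (real k + 2*real j + 2) * (real k + 2*real j + 1)"
    using kk by (simp add: algebra_simps power2_eq_square)
  moreover have "Bk k j \<ge> 0" by (simp add: Bk_def)
  moreover have "4 * (real j+1) * (real k + real j + 1) > 0" by simp
  ultimately have "Bk k j * (4 * (real j+1) * (real k + real j + 1)) \<le> Bk k (j+1) * (4 * (real j+1) * (real k + real j + 1))"
    using Bk_step[of k j] mult_left_mono[of _ _ "Bk k j"] by simp
  then show ?thesis using \<open>4 * (real j+1) * (real k + real j + 1) > 0\<close> by (simp only: mult_le_cancel_right_pos)
qed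

lemma Bk_down:
  assumes "k^2 \<le> k + 2*j + 2"
  shows "Bk k (j+1) \<le> Bk k j"
proof -
  define Y where "Y = 4 * (real j+1) * (real k + real j + 1)"
  define W where "W = (real k + 2*real j + 2) * (real k + 2*real j + 1)"
  have kk: "real k ^ 2 \<le> real k + 2*real j + 2" using assms
    by (metis of_nat_add of_nat_le_iff of_nat_mult of_nat_numeral of_nat_power)
  have YW: "W \<le> Y"
    using kk unfolding Y_def W_def by (simp add: algebra_simps power2_eq_square)
  have b0: "Bk k (j+1) \<ge> 0" by (simp add: Bk_def)
  have W0: "W > 0" unfolding W_def by simp
  have "Bk k (j+1) * W \<le> Bk k (j+1) * Y" using mult_left_mono[OF YW b0] .
  also have "\<dots> = Bk k j * W" using Bk_step[of k j] unfolding Y_def W_def .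
  finally show ?thesis using W0 by simp
qed

lemma Bk_max:
  assumes "k \<ge> 1"
  shows "Bk k j \<le> Bk k ((k^2 - k) div 2)"
proof -
  define js where "js = (k^2 - k) div 2"
  have kk: "k \<le> k^2" using assms by (simp add: power2_eq_square)
  have ev: "even (k^2 - k)" by (simp add: power2_eq_square)
  then have jsk: "k + 2*js = k^2" unfolding js_def using kk by simp
  have up: "\<And>d. d \<le> js \<Longrightarrow> Bk k (js - d) \<le> Bk k js"
  proof -
    fix d show "d \<le> js \<Longrightarrow> Bk k (js - d) \<le> Bk k js"
    proof (induction d)
      case 0 then show ?case by simp
    next
      case (Suc d)
      have "k + 2*(js - Suc d) + 2 \<le> k^2" using Suc.prems jsk by simp
      then have "Bk k (js - Suc d) \<le> Bk k (js - Suc d + 1)" by (rule Bk_up)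
      also have "js - Suc d + 1 = js - d" using Suc.prems by simp
      finally show ?case using Suc by simp
    qed
  qed
  have down: "\<And>d. Bk k (js + d) \<le> Bk k js"
  proof -
    fix d show "Bk k (js + d) \<le> Bk k js"
    proof (induction d)
      case 0 then show ?case by simp
    next
      case (Suc d)
      have "k^2 \<le> k + 2*(js + d) + 2" using jsk by simp
      then have "Bk k (js + d + 1) \<le> Bk k (js + d)" by (rule Bk_down)
      then show ?case using Suc by simp
    qed
  qed
  show ?thesis
  proof (cases "j \<le> js")
    case True
    then show ?thesis using up[of "js - j"] unfolding js_def by simp
  next
    case False
    then show ?thesis using down[of "j - js"] unfolding js_def by simp
  qed
qed

lemma binom_bound:
  assumes "k \<ge> 1" "k \<le> p"
  shows "real (p choose ((p - k) div 2)) / 2^p \<le> real (k^2 choose ((k^2 - k) div 2)) / 2^(k^2)"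
proof -
  have kk: "k \<le> k^2" using assms by (simp add: power2_eq_square)
  have ev: "even (k^2 - k)" by (simp add: power2_eq_square)
  then have jsk: "k + 2*((k^2 - k) div 2) = k^2" using kk by simp
  have R: "Bk k ((k^2 - k) div 2) = real (k^2 choose ((k^2 - k) div 2)) / 2^(k^2)"
    unfolding Bk_def jsk ..
  define j where "j = (p - k) div 2"
  show ?thesis
  proof (cases "even (p - k)")
    case True
    then have "p = k + 2*j" using assms unfolding j_def by simp
    then have "real (p choose ((p - k) div 2)) / 2^p = Bk k j" unfolding Bk_def j_def by simp
    then show ?thesis using Bk_max[OF assms(1), of j] R by simp
  next
    case False
    then have pj: "p = k + 2*j + 1" using assms unfolding j_def by presburger
    have m: "p choose j \<le> p choose (j+1)" by (rule binomial_mono) (use pj assms in auto)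
    have "Suc p choose Suc j = (p choose j) + (p choose Suc j)" by simp
    then have "2 * real (p choose j) \<le> real (Suc p choose Suc j)" using m by simp
    then have "real (p choose j) / 2^p \<le> real (Suc p choose Suc j) / 2^(Suc p)"
      by (simp add: field_simps)
    also have "\<dots> = Bk k (j+1)" unfolding Bk_def using pj by simp
    also have "\<dots> \<le> Bk k ((k^2 - k) div 2)" by (rule Bk_max[OF assms(1)])
    finally show ?thesis using R unfolding j_def by simp
  qed
qed


lemma Gs_zero_restrict:
  assumes "P = {i\<in>I. b i \<noteq> 0}" "finite I"
  shows "Gs b I S = Gs b P (S \<inter> P)"
proof -
  have "Gs b I S = (\<Sum>i\<in>P. if i \<in> S then b i else - b i)"
    unfolding Gs_def by (rule sum.mono_neutral_right) (use assms in \<open>auto\<close>)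
  also have "\<dots> = Gs b P (S \<inter> P)" unfolding Gs_def by (rule sum.cong) auto
  finally show ?thesis .
qed

lemma count_hits_zero:
  assumes fin: "finite I" and b: "\<forall>i\<in>I. 0 \<le> b i \<and> b i \<le> 1" and kt: "real k - 1 < t" and k1: "1 \<le> k"
  shows "real (card {S. S \<subseteq> I \<and> Gs b I S = t}) \<le> 2 ^ card I * (real (k^2 choose ((k^2 - k) div 2)) / 2^(k^2))"
proof -
  define P where "P = {i\<in>I. b i \<noteq> 0}"
  define Z where "Z = I - P"
  define HP where "HP = {U. U \<subseteq> P \<and> Gs b P U = t}"
  have finP: "finite P" "finite Z" using fin unfolding P_def Z_def by auto
  have posP: "\<forall>i\<in>P. 0 < b i \<and> b i \<le> 1"
  proof
    fix i assume "i \<in> P"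
    then have "i \<in> I" "b i \<noteq> 0" unfolding P_def by auto
    then show "0 < b i \<and> b i \<le> 1" using b by force
  qed
  have sub: "{S. S \<subseteq> I \<and> Gs b I S = t} \<subseteq> (\<lambda>(U,W). U \<union> W) ` (HP \<times> Pow Z)"
  proof
    fix S assume S: "S \<in> {S. S \<subseteq> I \<and> Gs b I S = t}"
    then have "Gs b P (S \<inter> P) = t" using Gs_zero_restrict[OF P_def fin, of S] by simp
    then have "S \<inter> P \<in> HP" unfolding HP_def by blast
    moreover have "S \<inter> Z \<in> Pow Z" by auto
    moreover have "S = (S \<inter> P) \<union> (S \<inter> Z)" using S unfolding Z_def by auto
    ultimately show "S \<in> (\<lambda>(U,W). U \<union> W) ` (HP \<times> Pow Z)"
      by (intro image_eqI[of _ _ "(S \<inter> P, S \<inter> Z)"]) auto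
  qed
  have finHP: "finite HP" unfolding HP_def using finP by auto
  have "card {S. S \<subseteq> I \<and> Gs b I S = t} \<le> card ((\<lambda>(U,W). U \<union> W) ` (HP \<times> Pow Z))"
    by (rule card_mono[OF _ sub]) (use finHP finP in auto)
  also have "\<dots> \<le> card (HP \<times> Pow Z)" by (rule card_image_le) (use finHP finP in auto)
  also have "\<dots> = card HP * 2 ^ card Z" using finHP finP by (simp add: card_cartesian_product card_Pow)
  finally have c0: "card {S. S \<subseteq> I \<and> Gs b I S = t} \<le> card HP * 2 ^ card Z" .
  have c1: "real (card {S. S \<subseteq> I \<and> Gs b I S = t}) \<le> real (card HP) * 2 ^ card Z"
  proof -
    have "real (card {S. S \<subseteq> I \<and> Gs b I S = t}) \<le> real (card HP * 2 ^ card Z)"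
      using c0 by (simp only: of_nat_le_iff)
    then show ?thesis by simp
  qed
  have cI: "card I = card P + card Z"
  proof -
    have "P \<subseteq> I" unfolding P_def by auto
    then have "card Z = card I - card P" unfolding Z_def using finP by (simp add: card_Diff_subset)
    moreover have "card P \<le> card I" using \<open>P \<subseteq> I\<close> fin by (simp add: card_mono)
    ultimately show ?thesis by simp
  qed
  have hp: "card HP \<le> (if k \<le> card P then card P choose ((card P - k) div 2) else 0)"
    unfolding HP_def by (rule count_hits[OF finP(1) posP kt])
  show ?thesis
  proof (cases "k \<le> card P")
    case True
    have bb: "real (card P choose ((card P - k) div 2)) / 2^card P \<le> real (k^2 choose ((k^2 - k) div 2)) / 2^(k^2)"
      by (rule binom_bound[OF k1 True])
    have "real (card HP) \<le> real (card P choose ((card P - k) div 2))" using hp True by simp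
    also have "\<dots> \<le> 2^card P * (real (k^2 choose ((k^2 - k) div 2)) / 2^(k^2))"
      using bb by (simp add: field_simps)
    finally have "real (card HP) * 2 ^ card Z \<le> 2^card P * (real (k^2 choose ((k^2 - k) div 2)) / 2^(k^2)) * 2 ^ card Z"
      by (rule mult_right_mono) simp
    also have "\<dots> = 2 ^ card I * (real (k^2 choose ((k^2 - k) div 2)) / 2^(k^2))"
      unfolding cI by (simp add: power_add)
    finally show ?thesis using c1 by linarith
  next
    case False
    then have "card HP = 0" using hp by simp
    then show ?thesis using c1 by simp
  qed
qed

lemma sign_count:
  fixes v :: "nat \<Rightarrow> real^'d" and x :: "real^'d"
  assumes x: "x \<noteq> 0" and v: "\<forall>i<n. norm (v i) \<le> 1" and k: "k = nat \<lceil>norm x\<rceil>"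
  shows "real (card {s \<in> PiE {..<n} (\<lambda>_. {-1,1::real}). (\<Sum>i<n. s i *\<^sub>R v i) = x})
           \<le> 2^n * (real (k^2 choose ((k^2 - k) div 2)) / 2^(k^2))"
proof -
  define a where "a i = inner (v i) x / norm x" for i
  define b where "b i = \<bar>a i\<bar>" for i
  define sg :: "nat \<Rightarrow> real" where "sg i = (if a i < 0 then -1 else 1)" for i
  define H where "H = {s \<in> PiE {..<n} (\<lambda>_. {-1,1::real}). (\<Sum>i<n. s i *\<^sub>R v i) = x}"
  define phi where "phi s = {i \<in> {..<n}. s i * sg i = 1}" for s :: "nat \<Rightarrow> real"
  have nx: "norm x > 0" using x by simp
  have ab: "a i = sg i * b i" for i unfolding sg_def b_def by auto
  have b1: "\<forall>i\<in>{..<n}. 0 \<le> b i \<and> b i \<le> 1"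
  proof
    fix i assume "i \<in> {..<n}"
    then have "norm (v i) \<le> 1" using v by auto
    moreover have "\<bar>inner (v i) x\<bar> \<le> norm (v i) * norm x" by (rule Cauchy_Schwarz_ineq2)
    moreover have "norm (v i) * norm x \<le> 1 * norm x"
      using \<open>norm (v i) \<le> 1\<close> nx by (intro mult_right_mono) auto
    ultimately have "\<bar>inner (v i) x\<bar> \<le> norm x" by simp
    then show "0 \<le> b i \<and> b i \<le> 1" unfolding b_def a_def using nx by (simp add: abs_div)
  qed
  have hitG: "Gs b {..<n} (phi s) = norm x" if s: "s \<in> H" for s
  proof -
    have sP: "s \<in> PiE {..<n} (\<lambda>_. {-1,1::real})" and sx: "(\<Sum>i<n. s i *\<^sub>R v i) = x" using s unfolding H_def by auto
    have "inner (\<Sum>i<n. s i *\<^sub>R v i) x = (\<Sum>i<n. s i * inner (v i) x)"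
      by (simp add: inner_sum_left)
    then have "(\<Sum>i<n. s i * inner (v i) x) = norm x ^ 2" using sx by (simp add: power2_norm_eq_inner)
    then have "(\<Sum>i<n. s i * inner (v i) x) / norm x = norm x" using nx by (simp add: power2_eq_square)
    then have e: "(\<Sum>i<n. s i * a i) = norm x" unfolding a_def by (simp add: sum_divide_distrib)
    have "(\<Sum>i<n. s i * a i) = Gs b {..<n} (phi s)" unfolding Gs_def
    proof (rule sum.cong)
      fix i assume i: "i \<in> {..<n}"
      then have si: "s i = -1 \<or> s i = 1" using sP by (auto simp: PiE_def Pi_def)
      have sgi: "sg i = -1 \<or> sg i = 1" unfolding sg_def by auto
      show "s i * a i = (if i \<in> phi s then b i else - b i)"
        unfolding ab phi_def using si sgi i by auto
    qed simp
    then show ?thesis using e by simp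
  qed
  have inj: "inj_on phi H"
  proof (rule inj_onI)
    fix s s' assume s: "s \<in> H" and s': "s' \<in> H" and eq: "phi s = phi s'"
    have sP: "s \<in> PiE {..<n} (\<lambda>_. {-1,1::real})" "s' \<in> PiE {..<n} (\<lambda>_. {-1,1::real})"
      using s s' unfolding H_def by auto
    show "s = s'"
    proof (rule PiE_ext[OF sP])
      fix i assume i: "i \<in> {..<n}"
      then have si: "s i = -1 \<or> s i = 1" "s' i = -1 \<or> s' i = 1" using sP by (auto simp: PiE_def Pi_def)
      have sgi: "sg i = -1 \<or> sg i = 1" unfolding sg_def by auto
      have "(s i * sg i = 1) = (s' i * sg i = 1)" using eq i unfolding phi_def by blast
      then show "s i = s' i" using si sgi by auto
    qed
  qed
  have c1: "real_of_int \<lceil>norm x\<rceil> < norm x + 1" by linarith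
  have c2: "0 < \<lceil>norm x\<rceil>" using nx by simp
  have kt: "real k - 1 < norm x" unfolding k using c1 c2 by simp
  have k1: "1 \<le> k" unfolding k using c2 by linarith
  have "card H = card (phi ` H)" using inj by (simp add: card_image)
  also have "\<dots> \<le> card {S. S \<subseteq> {..<n} \<and> Gs b {..<n} S = norm x}"
  proof (rule card_mono)
    show "finite {S. S \<subseteq> {..<n} \<and> Gs b {..<n} S = norm x}" by simp
    show "phi ` H \<subseteq> {S. S \<subseteq> {..<n} \<and> Gs b {..<n} S = norm x}"
      using hitG unfolding phi_def by blast
  qed
  finally have "real (card H) \<le> real (card {S. S \<subseteq> {..<n} \<and> Gs b {..<n} S = norm x})" by simp
  also have "\<dots> \<le> 2 ^ card {..<n} * (real (k^2 choose ((k^2 - k) div 2)) / 2^(k^2))"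
    by (rule count_hits_zero[OF _ b1 kt k1]) simp
  finally show ?thesis unfolding H_def by simp
qed

lemma sum_signs_int:
  assumes "S \<subseteq> {..<m}"
  shows "(\<Sum>i<m. (if i \<in> S then -1 else 1::int)) = int m - 2 * int (card S)"
proof -
  have "(\<Sum>i<m. (if i \<in> S then -1 else 1::int)) = (\<Sum>i<m. 1 - 2 * of_bool (i \<in> S))"
    by (rule sum.cong) auto
  also have "\<dots> = int m - 2 * (\<Sum>i<m. of_bool (i \<in> S))"
    by (simp add: sum_subtractf sum_distrib_left)
  also have "(\<Sum>i<m. of_bool (i \<in> S) :: int) = int (card ({..<m} \<inter> {i. i \<in> S}))"
    by simp
  also have "{..<m} \<inter> {i. i \<in> S} = S" using assms by auto
  finally show ?thesis .
qed

lemma rad_lower: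
  assumes "k \<le> m" "even (m - k)"
  shows "real (m choose ((m - k) div 2)) / 2^m \<le> rademacher_sum_prob m (int k)"
proof -
  define D where "D = PiE_dflt {..<m} (0::int) (\<lambda>_. {-1, 1::int})"
  define E where "E = {e::nat\<Rightarrow>int. (\<Sum>i<m. e i) = int k}"
  define j where "j = (m - k) div 2"
  have finD: "finite D" unfolding D_def by (intro finite_PiE_dflt) auto
  have neD: "D \<noteq> {}" unfolding D_def by simp
  have cD: "card D = 2^m" unfolding D_def by (subst card_PiE_dflt) (auto simp: numeral_2_eq_2)
  have pm: "Pi_pmf {..<m} 0 (\<lambda>_. pmf_of_set {-1, 1::int}) = pmf_of_set D"
    unfolding D_def by (rule Pi_pmf_of_set) auto
  have r: "rademacher_sum_prob m (int k) = real (card (D \<inter> E)) / 2^m"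
    unfolding rademacher_sum_prob_def pm E_def[symmetric]
    by (subst measure_pmf_of_set[OF neD finD]) (simp add: cD)
  define psi where "psi S = (\<lambda>i. if i < m then (if i \<in> S then -1 else 1::int) else 0)" for S
  define L where "L = {S. S \<subseteq> {..<m} \<and> card S = j}"
  have inj: "inj_on psi L"
  proof (rule inj_onI)
    fix S S' assume S: "S \<in> L" and S': "S' \<in> L" and eq: "psi S = psi S'"
    show "S = S'"
    proof (rule set_eqI)
      fix i
      show "i \<in> S \<longleftrightarrow> i \<in> S'"
      proof (cases "i < m")
        case True
        then show ?thesis using fun_cong[OF eq, of i] unfolding psi_def by (auto split: if_splits)
      next
        case False
        then show ?thesis using S S' unfolding L_def by auto
      qed
    qed
  qed
  have img: "psi ` L \<subseteq> D \<inter> E"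
  proof
    fix e assume "e \<in> psi ` L"
    then obtain S where S: "S \<in> L" "e = psi S" by auto
    have "e \<in> D" unfolding D_def PiE_dflt_def S(2) psi_def by auto
    moreover have "(\<Sum>i<m. e i) = int k"
    proof -
      have "(\<Sum>i<m. e i) = (\<Sum>i<m. (if i \<in> S then -1 else 1::int))"
        unfolding S(2) psi_def by (rule sum.cong) auto
      also have "\<dots> = int m - 2 * int (card S)" using S(1) unfolding L_def by (intro sum_signs_int) auto
      also have "card S = j" using S(1) unfolding L_def by auto
      moreover have "2 * ((m - k) div 2) = m - k" using assms(2) by simp
      then have "int m - 2 * int ((m - k) div 2) = int k" using assms(1) by linarith
      ultimately show ?thesis unfolding j_def by simp
    qed
    ultimately show "e \<in> D \<inter> E" unfolding E_def by auto
  qed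
  have "m choose j = card L" unfolding L_def by (simp add: n_subsets)
  also have "\<dots> = card (psi ` L)" using inj by (simp add: card_image)
  also have "\<dots> \<le> card (D \<inter> E)" by (rule card_mono) (use finD img in auto)
  finally have "real (m choose j) \<le> real (card (D \<inter> E))" by simp
  then show ?thesis unfolding r j_def by (simp add: divide_right_mono)
qed

lemma eq_const_sets:
  fixes f :: "'a \<Rightarrow> 'b::t2_space"
  assumes "f \<in> borel_measurable M"
  shows "{\<omega> \<in> space M. f \<omega> = x} \<in> sets M"
proof -
  have "f -` {x} \<inter> space M \<in> sets M" by (rule measurable_sets[OF assms]) simp
  moreover have "f -` {x} \<inter> space M = {\<omega> \<in> space M. f \<omega> = x}" by auto
  ultimately show ?thesis by simp
qed

lemma (in prob_space) sym_upper:
  fixes X :: "nat \<Rightarrow> 'a \<Rightarrow> real^'d" and x :: "real^'d"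
  assumes indep: "indep_vars (\<lambda>_. borel) X {..<n}" and n: "1 \<le> n"
    and sym: "\<forall>i<n. distr M borel (X i) = distr M borel (\<lambda>\<omega>. - X i \<omega>)"
    and bd: "\<forall>i<n. AE \<omega> in M. norm (X i \<omega>) \<le> 1"
    and x: "x \<noteq> 0" and k: "k = nat \<lceil>norm x\<rceil>"
  shows "measure M {\<omega> \<in> space M. (\<Sum>i<n. X i \<omega>) = x} \<le> real (k^2 choose ((k^2 - k) div 2)) / 2^(k^2)"
proof -
  define rho where "rho = real (k^2 choose ((k^2 - k) div 2)) / 2^(k^2)"
  define SG where "SG = PiE {..<n} (\<lambda>_. {-1,1::real})"
  define I where "I = {..<n}"
  define PI where "PI = (\<Pi>\<^sub>M i\<in>I. (borel :: (real^'d) measure))"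
  define A where "A s = {\<omega> \<in> space M. (\<Sum>i<n. s i *\<^sub>R X i \<omega>) = x}" for s :: "nat \<Rightarrow> real"
  have Ine: "I \<noteq> {}" using n unfolding I_def by (auto simp: lessThan_empty_iff)
  have rv: "\<And>i. i \<in> I \<Longrightarrow> random_variable borel (X i)"
    using indep unfolding indep_vars_def I_def by auto
  have finSG: "finite SG" unfolding SG_def by (intro finite_PiE) auto
  have cSG: "card SG = 2^n" unfolding SG_def by (subst card_PiE) (auto simp: numeral_2_eq_2)
  have Ameas: "A s \<in> sets M" for s
    unfolding A_def using rv by (intro eq_const_sets borel_measurable_sum) (auto simp: I_def)
  define E where "E = {y \<in> space PI. (\<Sum>i<n. y i) = x}"
  have Emeas: "E \<in> sets PI"
    unfolding E_def PI_def I_def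
    by (intro eq_const_sets borel_measurable_sum) (auto intro: measurable_component_singleton)
  have joint: "distr M PI (\<lambda>\<omega>. \<lambda>i\<in>I. X i \<omega>) = (\<Pi>\<^sub>M i\<in>I. distr M borel (X i))"
    using indep_vars_iff_distr_eq_PiM'[OF Ine rv] indep unfolding PI_def I_def by auto
  have Aeq: "measure M (A s) = measure M (A (\<lambda>_. 1))" if s: "s \<in> SG" for s
  proof -
    define Y where "Y i \<omega> = s i *\<^sub>R X i \<omega>" for i \<omega>
    have sv: "\<And>i. i \<in> I \<Longrightarrow> s i = -1 \<or> s i = 1" using s unfolding SG_def I_def by auto
    have indY: "indep_vars (\<lambda>_. borel) Y I"
      unfolding Y_def I_def by (rule indep_vars_compose2[OF indep]) simp
    have rvY: "\<And>i. i \<in> I \<Longrightarrow> random_variable borel (Y i)"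
      unfolding Y_def using rv by simp
    have dY: "distr M borel (Y i) = distr M borel (X i)" if i: "i \<in> I" for i
    proof (cases "s i = 1")
      case True then show ?thesis unfolding Y_def by simp
    next
      case False
      then have "s i = -1" using sv i by auto
      then show ?thesis unfolding Y_def using sym i unfolding I_def by simp
    qed
    have jointY: "distr M PI (\<lambda>\<omega>. \<lambda>i\<in>I. Y i \<omega>) = (\<Pi>\<^sub>M i\<in>I. distr M borel (Y i))"
      using indep_vars_iff_distr_eq_PiM'[OF Ine rvY] indY unfolding PI_def by auto
    also have "\<dots> = (\<Pi>\<^sub>M i\<in>I. distr M borel (X i))" by (rule PiM_cong) (auto simp: dY)
    finally have jj: "distr M PI (\<lambda>\<omega>. \<lambda>i\<in>I. Y i \<omega>) = distr M PI (\<lambda>\<omega>. \<lambda>i\<in>I. X i \<omega>)"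
      using joint by simp
    have mX: "(\<lambda>\<omega>. \<lambda>i\<in>I. X i \<omega>) \<in> measurable M PI" unfolding PI_def
      by (intro measurable_restrict rv)
    have mY: "(\<lambda>\<omega>. \<lambda>i\<in>I. Y i \<omega>) \<in> measurable M PI" unfolding PI_def
      by (intro measurable_restrict rvY)
    have pY: "(\<lambda>\<omega>. \<lambda>i\<in>I. Y i \<omega>) -` E \<inter> space M = A s"
      using mY unfolding E_def A_def Y_def I_def by (auto simp: measurable_def)
    have pX: "(\<lambda>\<omega>. \<lambda>i\<in>I. X i \<omega>) -` E \<inter> space M = A (\<lambda>_. 1)"
      using mX unfolding E_def A_def I_def by (auto simp: measurable_def)
    have "measure M (A s) = measure (distr M PI (\<lambda>\<omega>. \<lambda>i\<in>I. Y i \<omega>)) E"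
      using measure_distr[OF mY Emeas] pY by simp
    also have "\<dots> = measure (distr M PI (\<lambda>\<omega>. \<lambda>i\<in>I. X i \<omega>)) E" using jj by simp
    also have "\<dots> = measure M (A (\<lambda>_. 1))" using measure_distr[OF mX Emeas] pX by simp
    finally show ?thesis .
  qed
  have intA: "integrable M (indicator (A s) :: 'a \<Rightarrow> real)" for s
    using integrable_indicator[OF Ameas, of s "1::real"] by (simp add: emeasure_eq_measure)
  have A1: "A (\<lambda>_. 1) = {\<omega> \<in> space M. (\<Sum>i<n. X i \<omega>) = x}" unfolding A_def by simp
  have "real (2^n) * measure M (A (\<lambda>_. 1)) = (\<Sum>s\<in>SG. measure M (A s))"
    using Aeq cSG by simp
  also have "\<dots> = (\<Sum>s\<in>SG. integral\<^sup>L M (indicator (A s)))"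
    using Ameas by (simp add: sets.Int_space_eq2)
  also have "\<dots> = integral\<^sup>L M (\<lambda>\<omega>. \<Sum>s\<in>SG. indicator (A s) \<omega>)"
    by (rule Bochner_Integration.integral_sum[where I=SG and f="\<lambda>s. indicator (A s)", symmetric]) (rule intA)
  also have "\<dots> \<le> integral\<^sup>L M (\<lambda>\<omega>. 2^n * rho)"
  proof (rule integral_mono_AE)
    show "integrable M (\<lambda>\<omega>. \<Sum>s\<in>SG. indicator (A s) \<omega> :: real)"
      by (rule Bochner_Integration.integrable_sum[where f="\<lambda>s. indicator (A s)"]) (rule intA)
    show "integrable M (\<lambda>\<omega>. 2^n * rho)" by simp
    have "AE \<omega> in M. \<forall>i\<in>{..<n}. norm (X i \<omega>) \<le> 1"
      by (rule eventually_ball_finite) (use bd in auto)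
    then show "AE \<omega> in M. (\<Sum>s\<in>SG. indicator (A s) \<omega> :: real) \<le> 2^n * rho"
    proof (rule AE_mp[OF _ AE_I2[OF impI]])
      fix \<omega> assume om: "\<omega> \<in> space M" and nb: "\<forall>i\<in>{..<n}. norm (X i \<omega>) \<le> 1"
      have "(\<Sum>s\<in>SG. indicator (A s) \<omega> :: real) = (\<Sum>s\<in>SG. of_bool ((\<Sum>i<n. s i *\<^sub>R X i \<omega>) = x))"
        by (rule sum.cong) (use om in \<open>auto simp: A_def indicator_def\<close>)
      also have "\<dots> = real (card (SG \<inter> {s. (\<Sum>i<n. s i *\<^sub>R X i \<omega>) = x}))"
        using finSG by simp
      also have "SG \<inter> {s. (\<Sum>i<n. s i *\<^sub>R X i \<omega>) = x} = {s \<in> PiE {..<n} (\<lambda>_. {-1,1::real}). (\<Sum>i<n. s i *\<^sub>R X i \<omega>) = x}"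
        unfolding SG_def by auto
      also have "real (card \<dots>) \<le> 2^n * rho"
        unfolding rho_def by (rule sign_count[OF x _ k]) (use nb in auto)
      finally show "(\<Sum>s\<in>SG. indicator (A s) \<omega> :: real) \<le> 2^n * rho" .
    qed
  qed
  also have "\<dots> = 2^n * rho" by (simp add: prob_space)
  finally show ?thesis unfolding rho_def[symmetric] A1[symmetric] by simp
qed

lemma witness:
  fixes x :: "real^'d"
  assumes x: "x \<noteq> 0" and k: "k = nat \<lceil>norm x\<rceil>"
  shows "rademacher_sum_prob (k^2) (int k) \<in> sym_sum_probs TYPE(nat \<Rightarrow> real^'d) x"
proof -
  define m where "m = k^2"
  have nx: "norm x > 0" using x by simp
  have c1: "norm x \<le> real_of_int \<lceil>norm x\<rceil>" by linarith
  have c2: "0 < \<lceil>norm x\<rceil>" using nx by simp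
  have k1: "1 \<le> k" unfolding k using c2 by linarith
  have kx: "norm x \<le> real k" unfolding k using c1 c2 by simp
  have m1: "1 \<le> m" unfolding m_def using k1 by simp
  define u where "u = (1 / real k) *\<^sub>R x"
  have un: "norm u \<le> 1" unfolding u_def using kx k1 by (simp add: field_simps)
  have u0: "u \<noteq> 0" unfolding u_def using x k1 by simp
  define f where "f e = real_of_int e *\<^sub>R u" for e :: int
  define R where "R = Pi_pmf {..<m} (0::int) (\<lambda>_. pmf_of_set {-1, 1::int})"
  define P where "P = Pi_pmf {..<m} (0::real^'d) (\<lambda>_. pmf_of_set {-u, u})"
  define M where "M = measure_pmf P"
  define X where "X i \<omega> = (\<omega>::nat \<Rightarrow> real^'d) i" for i \<omega>
  have fimg: "f ` {-1, 1} = {-u, u}" unfolding f_def by simp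
  have finj: "inj_on f {-1, 1}" unfolding f_def using u0 by (auto simp: inj_on_def)
  have mpf: "map_pmf f (pmf_of_set {-1, 1}) = pmf_of_set {-u, u}"
    using map_pmf_of_set_inj[OF finj] fimg by simp
  have PR: "P = map_pmf (\<lambda>h. f \<circ> h) R"
    unfolding P_def R_def using Pi_pmf_map[of "{..<m}" f 0 0 "\<lambda>_. pmf_of_set {-1, 1::int}"] mpf
    by (simp add: f_def)
  have ps: "prob_space M" unfolding M_def by (rule measure_pmf.prob_space_axioms)
  have ind0: "prob_space.indep_vars M (\<lambda>_. count_space UNIV) (\<lambda>x f. f x) {..<m}"
    unfolding M_def P_def by (rule indep_vars_Pi_pmf) simp
  have ind: "prob_space.indep_vars M (\<lambda>_. borel) X {..<m}"
    using prob_space.indep_vars_compose2[OF ps ind0, of "\<lambda>_ v. v" "\<lambda>_. borel"]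
    unfolding X_def by simp
  have comp: "map_pmf (\<lambda>\<omega>. \<omega> i) P = pmf_of_set {-u, u}" if "i < m" for i
    unfolding P_def using Pi_pmf_component[of "{..<m}" i 0 "\<lambda>_. pmf_of_set {-u, u}"] that by simp
  have sym: "distr M borel (X i) = distr M borel (\<lambda>\<omega>. - X i \<omega>)" if i: "i < m" for i
  proof (rule measure_eqI)
    show "sets (distr M borel (X i)) = sets (distr M borel (\<lambda>\<omega>. - X i \<omega>))" by simp
    fix A assume "A \<in> sets (distr M borel (X i))"
    then have A: "A \<in> sets borel" by simp
    have "emeasure (distr M borel (X i)) A = emeasure (map_pmf (\<lambda>\<omega>. \<omega> i) P) A"
      unfolding M_def X_def by (subst emeasure_distr) (use A in auto)
    also have "\<dots> = emeasure (pmf_of_set {-u, u}) A" using comp[OF i] by simp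
    also have "pmf_of_set {-u, u} = map_pmf uminus (pmf_of_set {-u, u})"
    proof -
      have "inj_on uminus {-u, u::real^'d}" by (auto simp: inj_on_def)
      then have "map_pmf uminus (pmf_of_set {-u, u}) = pmf_of_set (uminus ` {-u, u})"
        by (intro map_pmf_of_set_inj) auto
      also have "uminus ` {-u, u} = {-u, u}" by auto
      finally show ?thesis by simp
    qed
    also have "map_pmf uminus (pmf_of_set {-u, u}) = map_pmf (\<lambda>\<omega>. - \<omega> i) P"
    proof -
      have "map_pmf (\<lambda>\<omega>. - \<omega> i) P = map_pmf uminus (map_pmf (\<lambda>\<omega>. \<omega> i) P)"
        by (simp add: map_pmf_comp)
      then show ?thesis using comp[OF i] by simp
    qed
    also have "emeasure (map_pmf (\<lambda>\<omega>. - \<omega> i) P) A = emeasure (distr M borel (\<lambda>\<omega>. - X i \<omega>)) A"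
      unfolding M_def X_def by (subst emeasure_distr) (use A in auto)
    finally show "emeasure (distr M borel (X i)) A = emeasure (distr M borel (\<lambda>\<omega>. - X i \<omega>)) A" .
  qed
  have bd: "AE \<omega> in M. norm (X i \<omega>) \<le> 1" if i: "i < m" for i
  proof -
    have "\<forall>\<omega>\<in>set_pmf P. norm (\<omega> i) \<le> 1"
      unfolding P_def using i un by (auto simp: set_Pi_pmf PiE_dflt_def)
    then show ?thesis unfolding M_def X_def by (simp add: AE_measure_pmf_iff)
  qed
  have meas: "measure M {\<omega> \<in> space M. (\<Sum>i<m. X i \<omega>) = x} = rademacher_sum_prob m (int k)"
  proof -
    have "measure M {\<omega> \<in> space M. (\<Sum>i<m. X i \<omega>) = x} = measure R ((\<lambda>h. f \<circ> h) -` {\<omega>. (\<Sum>i<m. \<omega> i) = x})"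
      unfolding M_def X_def PR by simp
    also have "(\<lambda>h. f \<circ> h) -` {\<omega>. (\<Sum>i<m. \<omega> i) = x} = {e. (\<Sum>i<m. e i) = int k}"
    proof (rule set_eqI)
      fix e :: "nat \<Rightarrow> int"
      have "(\<Sum>i<m. (f \<circ> e) i) = (real_of_int (\<Sum>i<m. e i) / real k) *\<^sub>R x"
        unfolding f_def u_def by (simp add: scaleR_sum_left[symmetric] sum_divide_distrib)
      moreover have "((real_of_int (\<Sum>i<m. e i) / real k) *\<^sub>R x = x) \<longleftrightarrow> real_of_int (\<Sum>i<m. e i) / real k = 1"
        using x by (metis scaleR_cancel_right scaleR_one)
      moreover have "real_of_int (\<Sum>i<m. e i) / real k = 1 \<longleftrightarrow> (\<Sum>i<m. e i) = int k"
      proof -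
        have kp: "real k > 0" using k1 by simp
        have "\<And>r. (r / real k = 1) \<longleftrightarrow> r = real k" using kp by (auto simp: field_simps)
        moreover have "\<And>S. (real_of_int S = real k) \<longleftrightarrow> S = int k"
          by (metis of_int_eq_iff of_int_of_nat_eq)
        ultimately show ?thesis by blast
      qed
      ultimately show "e \<in> (\<lambda>h. f \<circ> h) -` {\<omega>. (\<Sum>i<m. \<omega> i) = x} \<longleftrightarrow> e \<in> {e. (\<Sum>i<m. e i) = int k}"
        by simp
    qed
    finally show ?thesis unfolding rademacher_sum_prob_def R_def by simp
  qed
  show ?thesis
    unfolding sym_sum_probs_def m_def[symmetric]
    using ps m1 ind sym bd meas[symmetric] by blast
qed

theorem theorem3:
  fixes x :: "real^'d"
  assumes "x \<noteq> 0"
  defines "k \<equiv> \<lceil>norm x\<rceil>"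
  shows "(\<forall>p \<in> sym_sum_probs TYPE('a) x. p \<le> rademacher_sum_prob (nat (k^2)) k)
       \<and> Sup (sym_sum_probs TYPE(nat \<Rightarrow> real^'d) x) = rademacher_sum_prob (nat (k^2)) k"
proof -
  define kn where "kn = nat \<lceil>norm x\<rceil>"
  have nx: "norm x > 0" using assms(1) by simp
  have c2: "0 < \<lceil>norm x\<rceil>" using nx by simp
  have kk: "k = int kn" unfolding k_def kn_def using c2 by linarith
  have k1: "1 \<le> kn" unfolding kn_def using c2 by linarith
  have nk: "nat (k^2) = kn^2" unfolding kk by (simp add: nat_power_eq)
  define rho where "rho = rademacher_sum_prob (nat (k^2)) k"
  have rho: "rho = rademacher_sum_prob (kn^2) (int kn)" unfolding rho_def nk by (simp add: kk)
  have le: "kn \<le> kn^2" using k1 by (simp add: power2_eq_square)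
  have ev: "even (kn^2 - kn)" by (simp add: power2_eq_square)
  have rl: "real (kn^2 choose ((kn^2 - kn) div 2)) / 2^(kn^2) \<le> rho"
    unfolding rho by (rule rad_lower[OF le ev])
  have ub: "\<forall>p \<in> sym_sum_probs TYPE('b) x. p \<le> rho" for dummy :: "'b itself"
  proof
    fix p assume "p \<in> sym_sum_probs TYPE('b) x"
    then obtain M :: "'b measure" and n and X :: "nat \<Rightarrow> 'b \<Rightarrow> real^'d" where
      p: "p = measure M {\<omega> \<in> space M. (\<Sum>i<n. X i \<omega>) = x}" and ps: "prob_space M" and n: "n \<ge> 1"
      and ind: "prob_space.indep_vars M (\<lambda>_. borel) X {..<n}"
      and sy: "\<forall>i<n. distr M borel (X i) = distr M borel (\<lambda>\<omega>. - X i \<omega>)"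
      and bd: "\<forall>i<n. AE \<omega> in M. norm (X i \<omega>) \<le> 1"
      unfolding sym_sum_probs_def by blast
    have "p \<le> real (kn^2 choose ((kn^2 - kn) div 2)) / 2^(kn^2)"
      unfolding p by (rule prob_space.sym_upper[OF ps ind n sy bd assms(1) kn_def])
    then show "p \<le> rho" using rl by linarith
  qed
  have mem: "rho \<in> sym_sum_probs TYPE(nat \<Rightarrow> real^'d) x"
    unfolding rho by (rule witness[OF assms(1) kn_def])
  have "Sup (sym_sum_probs TYPE(nat \<Rightarrow> real^'d) x) = rho"
    by (rule cSup_eq_maximum[OF mem]) (use ub in blast)
  then show ?thesis using ub unfolding rho_def by blast
qed

end
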